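(* Let $C$ be a normal closed cone with nonempty interior in a real Banach space $X$. Let $f:\operatorname{int} C \to \operatorname{int} C$ be order-preserving and homogeneous, and suppose $f$ has an eigenvector in $\operatorname{int} C$. Let $g(x) = f(x)/\|f(x)\|$ for $x \in \operatorname{int} C$. Then for every $x \in \operatorname{int} C$, the closure of the orbit $\mathcal{O}(x, r_C(f)^{-1} f)$ is compact if and only if the closure of the orbit $\mathcal{O}(x, g)$ is compact.
   Context: A closed cone is a closed convex set $C \subset X$ with $\lambda C \subset C$ for $\lambda \ge 0$ and $C \cap (-C) = \{0\}$; $x\le y$ means $y-x\in C$. $C$ is normal if there is $\kappa > 0$ with $\|x\| \le \kappa \|y\|$ whenever $0 \le x \le y$. $f$ is homogeneous if $f(tx) = t f(x)$ for all $t > 0$. The cone spectral radius is $r_C(f) = \limsup_{k\to\infty} \|f^k(x)\|^{1/k}$ for any $x \in \operatorname{int} C$ (independent of $x$, and positive). The orbit of $x$ under a map $h$ is $\mathcal{O}(x,h) = \{h^k(x): k \in \mathbb{N}\}$. *)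

theory Defs
  imports "HOL-Analysis.Analysis"
begin

definition closed_cone :: "'a::real_normed_vector set \<Rightarrow> bool" where
  "closed_cone C \<longleftrightarrow> closed C \<and> convex C \<and> (\<forall>x\<in>C. \<forall>t::real. t \<ge> 0 \<longrightarrow> t *\<^sub>R x \<in> C)
     \<and> C \<inter> uminus ` C = {0}"

definition cone_le :: "'a::real_normed_vector set \<Rightarrow> 'a \<Rightarrow> 'a \<Rightarrow> bool" where
  "cone_le C x y \<longleftrightarrow> y - x \<in> C"

definition normal_cone :: "'a::real_normed_vector set \<Rightarrow> bool" where
  "normal_cone C \<longleftrightarrow> (\<exists>\<kappa>>0. \<forall>x y. cone_le C 0 x \<and> cone_le C x y \<longrightarrow> norm x \<le> \<kappa> * norm y)"

definition order_preserving_on :: "'a::real_normed_vector set \<Rightarrow> 'a set \<Rightarrow> ('a \<Rightarrow> 'a) \<Rightarrow> bool" where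
  "order_preserving_on C U f \<longleftrightarrow> (\<forall>x\<in>U. \<forall>y\<in>U. cone_le C x y \<longrightarrow> cone_le C (f x) (f y))"

definition homogeneous_on :: "'a::real_normed_vector set \<Rightarrow> ('a \<Rightarrow> 'a) \<Rightarrow> bool" where
  "homogeneous_on U f \<longleftrightarrow> (\<forall>x\<in>U. \<forall>t::real. t > 0 \<longrightarrow> f (t *\<^sub>R x) = t *\<^sub>R f x)"

text \<open>Cone spectral radius: limsup of norm (f^k x) powr (1/k) for a point x of int C
  (the value is independent of the chosen interior point; we fix one by choice).\<close>
definition cone_spectral_radius :: "'a::real_normed_vector set \<Rightarrow> ('a \<Rightarrow> 'a) \<Rightarrow> real" where
  "cone_spectral_radius C f =
     real_of_ereal (limsup (\<lambda>k. ereal (norm ((f ^^ k) (SOME x. x \<in> interior C)) powr (1 / real k))))"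

definition orbit :: "'a \<Rightarrow> ('a \<Rightarrow> 'a) \<Rightarrow> 'a set" where
  "orbit x h = range (\<lambda>k. (h ^^ k) x)"

end

theory Submission
  imports Defs
begin

lemma cpt_sub: "compact S \<Longrightarrow> closure A \<subseteq> S \<Longrightarrow> compact (closure A)"
proof -
  assume "compact S" "closure A \<subseteq> S"
  hence "compact (S \<inter> closure A)" by (intro compact_Int_closed) auto
  moreover have "S \<inter> closure A = closure A" using \<open>closure A \<subseteq> S\<close> by blast
  ultimately show ?thesis by simp
qed

lemma cc_scale: "closed_cone C \<Longrightarrow> z \<in> C \<Longrightarrow> t \<ge> 0 \<Longrightarrow> t *\<^sub>R z \<in> C"
  unfolding closed_cone_def by blast

lemma cc_interior_scale:
  fixes C :: "'a::real_normed_vector set"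
  assumes "closed_cone C" "z \<in> interior C" "t > 0"
  shows "t *\<^sub>R z \<in> interior C"
proof -
  have "open ((\<lambda>x. t *\<^sub>R x) ` interior C)" using assms(3) by (intro open_scaling) auto
  moreover have "(\<lambda>x. t *\<^sub>R x) ` interior C \<subseteq> C"
    using assms interior_subset cc_scale by fastforce
  ultimately have "(\<lambda>x. t *\<^sub>R x) ` interior C \<subseteq> interior C" using interior_maximal by blast
  thus ?thesis using assms(2) by blast
qed

lemma cc_zero_interior:
  fixes C :: "'a::real_normed_vector set" and z :: 'a
  assumes "closed_cone C" "0 \<in> interior C"
  shows "z = 0"
proof (rule ccontr)
  assume nz: "z \<noteq> 0"
  obtain e where e: "e > 0" "ball 0 e \<subseteq> C" using assms(2) mem_interior by blast
  define w where "w = (e / (2 * norm z)) *\<^sub>R z"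
  have nw: "norm w = e/2" using nz e(1) by (simp add: w_def)
  have "w \<in> C" using nw e by (auto simp: subset_iff)
  moreover have "-w \<in> C" using nw e by (auto simp: subset_iff)
  ultimately have "w \<in> C \<inter> uminus ` C" by (auto intro!: image_eqI[of w uminus "-w"])
  hence "w = 0" using assms(1) unfolding closed_cone_def by blast
  thus False using nw e by simp
qed

lemma cc_below:
  fixes C :: "'a::real_normed_vector set"
  assumes "y \<in> interior C"
  shows "\<exists>a>0. y - a *\<^sub>R v \<in> C"
proof -
  obtain e where e: "e > 0" "ball y e \<subseteq> C" using assms mem_interior by blast
  define a where "a = e / (2 * (norm v + 1))"
  have "0 < 2 * (norm v + 1)" by (smt (verit) norm_ge_zero)
  hence a: "a > 0" unfolding a_def using e by (intro divide_pos_pos)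
  have "norm (a *\<^sub>R v) < e"
  proof -
    have "norm (a *\<^sub>R v) = a * norm v" using a by simp
    also have "\<dots> < a * (norm v + 1)" using a by simp
    also have "\<dots> = e/2"
    proof -
      have "norm v + 1 > 0" by (smt (verit) norm_ge_zero)
      thus ?thesis by (simp add: a_def field_simps)
    qed
    also have "\<dots> < e" using e by simp
    finally show ?thesis .
  qed
  hence "y - a *\<^sub>R v \<in> ball y e" by (simp add: dist_norm)
  thus ?thesis using e a by blast
qed

lemma cc_above:
  fixes C :: "'a::real_normed_vector set"
  assumes "closed_cone C" "v \<in> interior C"
  shows "\<exists>b>0. b *\<^sub>R v - y \<in> C"
proof -
  obtain t where t: "t > 0" "v - t *\<^sub>R y \<in> C" using cc_below[OF assms(2), of y] by blast
  have "(1/t) *\<^sub>R (v - t *\<^sub>R y) \<in> C" using cc_scale[OF assms(1) t(2)] t(1) by simp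
  moreover have "(1/t) *\<^sub>R (v - t *\<^sub>R y) = (1/t) *\<^sub>R v - y" using t(1) by (simp add: scaleR_diff_right)
  ultimately show ?thesis using t(1) by (intro exI[of _ "1/t"]) auto
qed

theorem mainTheorem4:
  fixes C :: "'a::banach set" and f :: "'a \<Rightarrow> 'a"
  assumes "closed_cone C" and "normal_cone C" and "interior C \<noteq> {}"
    and "f ` interior C \<subseteq> interior C"
    and "order_preserving_on C (interior C) f"
    and "homogeneous_on (interior C) f"
    and "\<exists>v\<in>interior C. \<exists>\<mu>::real. f v = \<mu> *\<^sub>R v"
    and "x \<in> interior C"
  shows "compact (closure (orbit x (\<lambda>y. inverse (cone_spectral_radius C f) *\<^sub>R f y)))
     \<longleftrightarrow> compact (closure (orbit x (\<lambda>y. inverse (norm (f y)) *\<^sub>R f y)))"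
proof (cases "\<forall>z::'a. z = 0")
  case True
  have sub: "closure S \<subseteq> {0}" for S :: "'a set" using True by blast
  have cpt: "compact (closure S)" for S :: "'a set"
    using finite_subset[OF sub[of S]] by (intro finite_imp_compact) simp
  show ?thesis using cpt by blast
next
  case False
  then obtain z0 :: 'a where z0: "z0 \<noteq> 0" by blast
  have cc: "closed_cone C" using assms(1) .
  have nz: "\<And>w. w \<in> interior C \<Longrightarrow> w \<noteq> 0"
    using cc_zero_interior[OF cc] z0 by blast
  have intC: "interior C \<subseteq> C" by (rule interior_subset)
  obtain v \<mu> where v: "v \<in> interior C" and fv: "f v = \<mu> *\<^sub>R v" using assms(7) by blast
  have fvi: "f v \<in> interior C" using assms(4) v by blast
  have mu: "\<mu> > 0"
  proof (rule ccontr)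
    assume "\<not> \<mu> > 0"
    hence "\<mu> = 0 \<or> \<mu> < 0" by linarith
    thus False
    proof
      assume "\<mu> = 0" then have "f v = 0" using fv by simp
      thus False using nz fvi by auto
    next
      assume m: "\<mu> < 0"
      have fvC: "f v \<in> C" using fvi intC by blast
      have "(- inverse \<mu>) *\<^sub>R f v \<in> C" by (rule cc_scale[OF cc fvC]) (use m in simp)
      hence "-v \<in> C" using fv m by simp
      hence "v \<in> C \<inter> uminus ` C" using v intC by (auto intro!: image_eqI[of v uminus "-v"])
      hence "v = 0" using cc unfolding closed_cone_def by blast
      thus False using nz v by blast
    qed
  qed
  define T where "T = (\<lambda>y. inverse \<mu> *\<^sub>R f y)"
  have Tint: "\<And>y. y \<in> interior C \<Longrightarrow> T y \<in> interior C"
    using cc_interior_scale[OF cc] assms(4) mu by (auto simp: T_def)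
  have Tv: "T v = v" using fv mu by (simp add: T_def)
  have fT: "\<And>w. f w = \<mu> *\<^sub>R T w" using mu by (simp add: T_def)
  have Thom: "\<And>y t. y \<in> interior C \<Longrightarrow> t > 0 \<Longrightarrow> T (t *\<^sub>R y) = t *\<^sub>R T y"
    using assms(6) by (simp add: T_def homogeneous_on_def)
  have Tmono: "\<And>y z. y \<in> interior C \<Longrightarrow> z \<in> interior C \<Longrightarrow> z - y \<in> C \<Longrightarrow> T z - T y \<in> C"
  proof -
    fix y z assume h: "y \<in> interior C" "z \<in> interior C" "z - y \<in> C"
    have "f z - f y \<in> C" using assms(5) h unfolding order_preserving_on_def cone_le_def by blast
    hence "inverse \<mu> *\<^sub>R (f z - f y) \<in> C" by (rule cc_scale[OF cc]) (use mu in auto)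
    thus "T z - T y \<in> C" by (simp add: T_def scaleR_diff_right)
  qed
  have Titer_int: "\<And>y k. y \<in> interior C \<Longrightarrow> (T^^k) y \<in> interior C"
  proof -
    fix y k assume "y \<in> interior C" thus "(T^^k) y \<in> interior C" by (induction k) (auto intro: Tint)
  qed
  obtain \<kappa> where ka: "\<kappa> > 0" and kn: "\<And>p q. p \<in> C \<Longrightarrow> q - p \<in> C \<Longrightarrow> norm p \<le> \<kappa> * norm q"
    using assms(2) unfolding normal_cone_def cone_le_def by auto
  have bounds: "\<And>y. y \<in> interior C \<Longrightarrow> \<exists>c1 c2. c1 > 0 \<and> (\<forall>k. c1 \<le> norm ((T^^k) y) \<and> norm ((T^^k) y) \<le> c2)"
  proof -
    fix y assume y: "y \<in> interior C"
    obtain a where a: "a > 0" "y - a *\<^sub>R v \<in> C" using cc_below[OF y] by blast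
    obtain b where b: "b > 0" "b *\<^sub>R v - y \<in> C" using cc_above[OF cc v] by blast
    have av: "a *\<^sub>R v \<in> interior C" using cc_interior_scale[OF cc v a(1)] .
    have bv: "b *\<^sub>R v \<in> interior C" using cc_interior_scale[OF cc v b(1)] .
    have Tav: "T (a *\<^sub>R v) = a *\<^sub>R v" using Thom[OF v a(1)] Tv by simp
    have Tbv: "T (b *\<^sub>R v) = b *\<^sub>R v" using Thom[OF v b(1)] Tv by simp
    have lo: "(T^^k) y - a *\<^sub>R v \<in> C" for k
    proof (induction k)
      case 0 thus ?case using a by simp
    next
      case (Suc k)
      have "T ((T^^k) y) - T (a *\<^sub>R v) \<in> C" by (rule Tmono[OF av Titer_int[OF y] Suc.IH])
      thus ?case using Tav by simp
    qed
    have hi: "b *\<^sub>R v - (T^^k) y \<in> C" for k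
    proof (induction k)
      case 0 thus ?case using b by simp
    next
      case (Suc k)
      have "T (b *\<^sub>R v) - T ((T^^k) y) \<in> C" by (rule Tmono[OF Titer_int[OF y] bv Suc.IH])
      thus ?case using Tbv by simp
    qed
    have vC: "v \<noteq> 0" using nz v by blast
    define c1 where "c1 = a * norm v / \<kappa>"
    have "c1 > 0" using a vC ka by (simp add: c1_def)
    moreover have "c1 \<le> norm ((T^^k) y)" for k
    proof -
      have "norm (a *\<^sub>R v) \<le> \<kappa> * norm ((T^^k) y)" using kn[OF _ lo[of k]] av intC by blast
      hence "a * norm v \<le> \<kappa> * norm ((T^^k) y)" using a by simp
      thus ?thesis using ka by (simp add: c1_def divide_le_eq mult.commute)
    qed
    moreover have "norm ((T^^k) y) \<le> \<kappa> * (b * norm v)" for k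
    proof -
      have "norm ((T^^k) y) \<le> \<kappa> * norm (b *\<^sub>R v)" using kn[OF _ hi[of k]] Titer_int[OF y] intC by blast
      thus ?thesis using b by simp
    qed
    ultimately show "\<exists>c1 c2. c1 > 0 \<and> (\<forall>k. c1 \<le> norm ((T^^k) y) \<and> norm ((T^^k) y) \<le> c2)" by blast
  qed
  have fiter: "\<And>y k. y \<in> interior C \<Longrightarrow> (f^^k) y = (\<mu>^k) *\<^sub>R (T^^k) y"
  proof -
    fix y k assume y: "y \<in> interior C"
    show "(f^^k) y = (\<mu>^k) *\<^sub>R (T^^k) y"
    proof (induction k)
      case 0 show ?case by simp
    next
      case (Suc k)
      have "(f^^Suc k) y = f ((\<mu>^k) *\<^sub>R (T^^k) y)" using Suc by simp
      also have "\<dots> = (\<mu>^k) *\<^sub>R f ((T^^k) y)" using assms(6) Titer_int[OF y] mu unfolding homogeneous_on_def by simp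
      also have "\<dots> = (\<mu>^Suc k) *\<^sub>R (T^^Suc k) y" using fT[of "(T^^k) y"] by (simp add: mult.commute)
      finally show ?case .
    qed
  qed
  define x0 where "x0 = (SOME x. x \<in> interior C)"
  have x0: "x0 \<in> interior C" using v unfolding x0_def by (rule someI)
  obtain d1 d2 where d: "d1 > 0" "\<And>k. d1 \<le> norm ((T^^k) x0)" "\<And>k. norm ((T^^k) x0) \<le> d2"
    using bounds[OF x0] by blast
  have d2: "d2 > 0" using d(1) d(2)[of 0] d(3)[of 0] by linarith
  define s where "s = (\<lambda>k::nat. norm ((f^^k) x0) powr (1 / real k))"
  have s_eq: "s k = \<mu> * norm ((T^^k) x0) powr (1/real k)" if "k \<ge> 1" for k
  proof -
    have "norm ((f^^k) x0) = \<mu>^k * norm ((T^^k) x0)" using fiter[OF x0] mu by simp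
    hence "s k = (\<mu>^k) powr (1/real k) * norm ((T^^k) x0) powr (1/real k)"
      using mu by (simp add: s_def powr_mult)
    also have "(\<mu>^k) powr (1/real k) = \<mu>"
    proof -
      have "(\<mu>^k) powr (1/real k) = (\<mu> powr real k) powr (1/real k)" using mu by (simp add: powr_realpow)
      also have "\<dots> = \<mu> powr (real k * (1/real k))" by (simp add: powr_powr)
      also have "\<dots> = \<mu>" using that mu by simp
      finally show ?thesis .
    qed
    finally show ?thesis .
  qed
  have lim1: "(\<lambda>k. \<mu> * d powr (1 / real k)) \<longlonglongrightarrow> \<mu>" if "d > 0" for d
  proof -
    have "(\<lambda>k. d powr (1 / real k)) \<longlonglongrightarrow> d powr 0"
      by (rule tendsto_powr) (use that lim_1_over_n in auto)
    hence "(\<lambda>k. \<mu> * d powr (1/real k)) \<longlonglongrightarrow> \<mu> * 1" using that by (intro tendsto_mult_left) simp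
    thus ?thesis by simp
  qed
  have slim: "s \<longlonglongrightarrow> \<mu>"
  proof (rule tendsto_sandwich[OF _ _ lim1[OF d(1)] lim1[OF d2]])
    show "\<forall>\<^sub>F k in sequentially. \<mu> * d1 powr (1/real k) \<le> s k"
    proof (rule eventually_mono[OF eventually_ge_at_top[of 1]])
      fix k :: nat assume k: "k \<ge> 1"
      have "d1 powr (1/real k) \<le> norm ((T^^k) x0) powr (1/real k)"
        using d by (intro powr_mono2) auto
      thus "\<mu> * d1 powr (1/real k) \<le> s k" using s_eq[OF k] mu by simp
    qed
    show "\<forall>\<^sub>F k in sequentially. s k \<le> \<mu> * d2 powr (1/real k)"
    proof (rule eventually_mono[OF eventually_ge_at_top[of 1]])
      fix k :: nat assume k: "k \<ge> 1"
      have "norm ((T^^k) x0) powr (1/real k) \<le> d2 powr (1/real k)"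
        using d by (intro powr_mono2) auto
      thus "s k \<le> \<mu> * d2 powr (1/real k)" using s_eq[OF k] mu by simp
    qed
  qed
  have r: "cone_spectral_radius C f = \<mu>"
  proof -
    have "(\<lambda>k. ereal (s k)) \<longlonglongrightarrow> ereal \<mu>" using slim by simp
    hence "limsup (\<lambda>k. ereal (s k)) = ereal \<mu>" by (intro lim_imp_Limsup) simp_all
    thus ?thesis by (simp add: cone_spectral_radius_def s_def x0_def)
  qed
  define g where "g = (\<lambda>y. inverse (norm (f y)) *\<^sub>R f y)"
  have gsc: "g (c *\<^sub>R w) = inverse (norm (T w)) *\<^sub>R T w" if "w \<in> interior C" "c > 0" for w c
  proof -
    have "f (c *\<^sub>R w) = c *\<^sub>R f w" using assms(6) that unfolding homogeneous_on_def by blast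
    also have "\<dots> = (c * \<mu>) *\<^sub>R T w" using fT[of w] by simp
    finally have e: "f (c *\<^sub>R w) = (c * \<mu>) *\<^sub>R T w" .
    have "c * \<mu> > 0" using that mu by simp
    have "inverse c * (inverse \<mu> * (c * \<mu>)) = 1" using that mu by (simp add: field_simps)
    thus ?thesis using e that mu by (simp add: g_def)
  qed
  have giter: "(g^^Suc k) x = inverse (norm ((T^^Suc k) x)) *\<^sub>R (T^^Suc k) x" for k
  proof (induction k)
    case 0
    show ?case using gsc[OF assms(8), of 1] by simp
  next
    case (Suc k)
    have pos: "inverse (norm ((T^^Suc k) x)) > 0" using nz[OF Titer_int[OF assms(8), of "Suc k"]] by simp
    have "(g^^Suc (Suc k)) x = g ((g^^Suc k) x)" by simp
    also have "\<dots> = g (inverse (norm ((T^^Suc k) x)) *\<^sub>R (T^^Suc k) x)" using Suc by simp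
    also have "\<dots> = inverse (norm (T ((T^^Suc k) x))) *\<^sub>R T ((T^^Suc k) x)"
      by (rule gsc[OF Titer_int[OF assms(8)] pos])
    also have "\<dots> = inverse (norm ((T^^Suc (Suc k)) x)) *\<^sub>R (T^^Suc (Suc k)) x" by simp
    finally show ?case .
  qed
  have Teq: "(\<lambda>y. inverse (cone_spectral_radius C f) *\<^sub>R f y) = T" by (simp add: r T_def)
  have geq: "(\<lambda>y. inverse (norm (f y)) *\<^sub>R f y) = g" by (simp add: g_def)
  obtain c1 c2 where c: "c1 > 0" "\<And>k. c1 \<le> norm ((T^^k) x)" "\<And>k. norm ((T^^k) x) \<le> c2"
    using bounds[OF assms(8)] by blast
  have inO: "(h^^k) x \<in> orbit x h" for h k by (auto simp: orbit_def)
  show ?thesis unfolding Teq geq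
  proof
    assume K: "compact (closure (orbit x T))"
    define \<phi> where "\<phi> = (\<lambda>y::'a. inverse (norm y) *\<^sub>R y)"
    have Kn: "closure (orbit x T) \<subseteq> {y. c1 \<le> norm y}"
    proof (rule closure_minimal)
      show "orbit x T \<subseteq> {y. c1 \<le> norm y}" using c by (auto simp: orbit_def)
      show "closed {y::'a. c1 \<le> norm y}" by (intro closed_Collect_le continuous_intros)
    qed
    have "continuous_on (closure (orbit x T)) \<phi>"
      unfolding \<phi>_def using Kn c(1) by (intro continuous_intros) auto
    hence cK: "compact (insert x (\<phi> ` closure (orbit x T)))"
      using K by (intro compact_insert compact_continuous_image)
    have "orbit x g \<subseteq> insert x (\<phi> ` closure (orbit x T))"
    proof
      fix y assume "y \<in> orbit x g"
      then obtain k where k: "y = (g^^k) x" by (auto simp: orbit_def)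
      show "y \<in> insert x (\<phi> ` closure (orbit x T))"
      proof (cases k)
        case 0 thus ?thesis using k by simp
      next
        case (Suc j)
        have "(T^^Suc j) x \<in> closure (orbit x T)" using inO closure_subset by blast
        moreover have "y = \<phi> ((T^^Suc j) x)" using k Suc giter by (simp add: \<phi>_def)
        ultimately show ?thesis by blast
      qed
    qed
    hence "closure (orbit x g) \<subseteq> insert x (\<phi> ` closure (orbit x T))"
      using cK by (intro closure_minimal compact_imp_closed) auto
    thus "compact (closure (orbit x g))" using cK
      by (rule cpt_sub[rotated])
  next
    assume K: "compact (closure (orbit x g))"
    define M where "M = (\<lambda>p::real \<times> 'a. fst p *\<^sub>R snd p) ` ({c1..c2} \<times> closure (orbit x g))"
    have cM: "compact (insert x M)"
      unfolding M_def using K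
      by (intro compact_insert compact_continuous_image compact_Times compact_Icc continuous_intros)
    have "orbit x T \<subseteq> insert x M"
    proof
      fix y assume "y \<in> orbit x T"
      then obtain k where k: "y = (T^^k) x" by (auto simp: orbit_def)
      show "y \<in> insert x M"
      proof (cases k)
        case 0 thus ?thesis using k by simp
      next
        case (Suc j)
        have gin: "(g^^Suc j) x \<in> closure (orbit x g)" using inO closure_subset by blast
        have nw: "norm ((T^^Suc j) x) \<noteq> 0" using c(1) c(2)[of "Suc j"] by linarith
        have "y = norm ((T^^Suc j) x) *\<^sub>R (g^^Suc j) x" using k Suc giter[of j] nw by simp
        hence "y = (\<lambda>p::real \<times> 'a. fst p *\<^sub>R snd p) (norm ((T^^Suc j) x), (g^^Suc j) x)" by simp
        moreover have "(norm ((T^^Suc j) x), (g^^Suc j) x) \<in> {c1..c2} \<times> closure (orbit x g)"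
          using c(2)[of "Suc j"] c(3)[of "Suc j"] gin by simp
        ultimately show ?thesis unfolding M_def by blast
      qed
    qed
    hence "closure (orbit x T) \<subseteq> insert x M"
      using cM by (intro closure_minimal compact_imp_closed) auto
    thus "compact (closure (orbit x T))" using cM
      by (rule cpt_sub[rotated])
  qed
qed

end
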